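(* Consider the network and the protocols described in the context. Let fairMAC$_0$ denote fairMAC with a finite maximum number of pending packets $P$ and with maximum number of forwarded packets per joint packet $Q=0$. Then the long-term throughput per node and the long-term bit-cost of every node under fairMAC$_0$ equal those of Direct Link: $$\mathsf{S}^{\mathrm{fair}_0}=\mathsf{S}^{\mathrm{direct}}\quad\text{and}\quad \mathsf{B}^{\mathrm{fair}_0}_k=\mathsf{B}^{\mathrm{direct}}_k\ \text{ for all } k=1,\dots,N.$$
   Context: Network model: $N$ nodes transmit data to a common access point (AP). For nodes $k,l$, $R_{kl}>0$ is the achievable rate (bit/s) from $k$ to $l$, and $R_k>0$ the rate from $k$ directly to the AP; rates are constant in time. Each packet carries 1 bit of data, so a transmission at rate $R$ lasts $1/R$. Node $h$ is the helper $h_k$ of node $k$ iff $h=\arg\min_{l}\bigl(1/R_{kl}+1/R_l\bigr)$ and $1/R_{kh}+1/R_h<1/R_k$; otherwise $k$ has no helper. All nodes transmit with the same power $\mathcal{E}$ while transmitting. All nodes are saturated (always have own data to send). Medium access is slotted CSMA with slot length $\sigma$ and transmit probability $\tau$: a node that senses an idle slot starts a transmission of an own packet in the next slot with probability $\tau$; a packet is lost (collision) iff another node transmits simultaneously; otherwise the receiver decodes it. Control headers and acknowledgments (ACKs) have negligible duration, are decodable by all nodes, and are never lost; the only packet losses are collisions. Direct Link: every node transmits each own packet directly to the AP at its rate; on success the AP sends an ACK; on collision the node retransmits the same packet later. fairMAC (parameters $P$, $Q$): a node $k$ with helper $h$ keeps a counter $p$ (pending packets, initially 0). While $p\le P$,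 $k$ sends its packet to $h$ at rate $R_{kh}$; if $h$ decodes it, $h$ appends it to an infinite forwarding queue, sends a "preACK" to $k$, and $k$ increases $p$ by one; once $p$ exceeds $P$, $k$ transmits its current packet directly to the AP. When a helper $h$ wins the medium it sends one joint packet at rate $R_h$ consisting of one own packet plus up to $Q$ packets from its forwarding queue; if no collision occurs the AP sends one "jointACK" to $h$ and to all nodes with data in the joint packet; $h$ removes these from its queue and each such source decreases $p$ by the number of its packets forwarded. Nodes without helper behave as in Direct Link. Throughput $\mathsf{S}_k$ of node $k$: long-term average number of own data bits of $k$ successfully delivered to the AP per unit time (forwarded data of others does not count). Average power $\bar{\mathcal{E}}_k$: $\mathcal{E}$ times the long-term fraction of time node $k$ transmits (including forwarding). Bit-cost $\mathsf{B}_k=\bar{\mathcal{E}}_k/\mathsf{S}_k$. All nodes have the same throughput, denoted $\mathsf{S}$. *)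

theory Defs
  imports "HOL-Probability.Probability"
begin

(* Nodes are 0..N-1.  R k l : rate from node k to node l,  Rap k : rate from k to the AP. *)

definition relay_cost :: "(nat \<Rightarrow> nat \<Rightarrow> real) \<Rightarrow> (nat \<Rightarrow> real) \<Rightarrow> nat \<Rightarrow> nat \<Rightarrow> real" where
  "relay_cost R Rap k l = 1 / R k l + 1 / Rap l"

definition is_helper :: "nat \<Rightarrow> (nat \<Rightarrow> nat \<Rightarrow> real) \<Rightarrow> (nat \<Rightarrow> real) \<Rightarrow> nat \<Rightarrow> nat \<Rightarrow> bool" where
  "is_helper N R Rap k h \<longleftrightarrow> h < N \<and> h \<noteq> k \<and>
     (\<forall>l<N. l \<noteq> k \<longrightarrow> relay_cost R Rap k h \<le> relay_cost R Rap k l) \<and>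
     relay_cost R Rap k h < 1 / Rap k"

(* ties in the argmin are resolved by an arbitrary (but fixed) choice *)
definition helper :: "nat \<Rightarrow> (nat \<Rightarrow> nat \<Rightarrow> real) \<Rightarrow> (nat \<Rightarrow> real) \<Rightarrow> nat \<Rightarrow> nat option" where
  "helper N R Rap k = (if \<exists>h. is_helper N R Rap k h then Some (SOME h. is_helper N R Rap k h) else None)"

record dstate =
  ddlv :: "nat \<Rightarrow> nat"     (* own packets delivered to the AP *)
  dtxt :: "nat \<Rightarrow> real"    (* total time spent transmitting *)
  dclk :: real

(* One contention epoch: an idle slot of length sigma is sensed, then every node
   independently transmits (tx k) in the next slot; if someone transmits the channel
   is busy for the longest transmission. *)
definition direct_step :: "nat \<Rightarrow> real \<Rightarrow> (nat \<Rightarrow> real) \<Rightarrow> (nat \<Rightarrow> bool) \<Rightarrow> dstate \<Rightarrow> dstate" where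
  "direct_step N \<sigma> Rap tx s =
    (let S = {k. k < N \<and> tx k};
         d = (\<lambda>k. 1 / Rap k);
         busy = (if S = {} then 0 else Max (d ` S));
         s1 = s\<lparr>dtxt := (\<lambda>j. dtxt s j + (if j \<in> S then d j else 0)), dclk := dclk s + \<sigma> + busy\<rparr>
     in if card S = 1 then
          (let k = the_elem S in s1\<lparr>ddlv := (ddlv s1)(k := ddlv s1 k + 1)\<rparr>)
        else s1)"

definition dinit :: dstate where
  "dinit = \<lparr>ddlv = (\<lambda>_. 0), dtxt = (\<lambda>_. 0), dclk = 0\<rparr>"

(* omega (n,k) : transmit decision of node k in epoch n *)
primrec direct_run :: "nat \<Rightarrow> real \<Rightarrow> (nat \<Rightarrow> real) \<Rightarrow> (nat \<times> nat \<Rightarrow> bool) \<Rightarrow> nat \<Rightarrow> dstate" where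
  "direct_run N \<sigma> Rap \<omega> 0 = dinit"
| "direct_run N \<sigma> Rap \<omega> (Suc n) = direct_step N \<sigma> Rap (\<lambda>k. \<omega> (n, k)) (direct_run N \<sigma> Rap \<omega> n)"

record fstate =
  pend :: "nat \<Rightarrow> nat"
  fq   :: "nat \<Rightarrow> nat list"   (* forwarding queue: list of source nodes of queued packets *)
  fdlv :: "nat \<Rightarrow> nat"        (* own packets delivered to the AP *)
  ftxt :: "nat \<Rightarrow> real"       (* total time spent transmitting (incl. forwarding) *)
  fclk :: real

definition to_helper :: "(nat \<Rightarrow> nat option) \<Rightarrow> nat \<Rightarrow> fstate \<Rightarrow> nat \<Rightarrow> bool" where
  "to_helper hlp P s k = (case hlp k of Some h \<Rightarrow> pend s k \<le> P | None \<Rightarrow> False)"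

definition fair_step :: "nat \<Rightarrow> real \<Rightarrow> (nat \<Rightarrow> nat \<Rightarrow> real) \<Rightarrow> (nat \<Rightarrow> real) \<Rightarrow> nat \<Rightarrow> nat
    \<Rightarrow> (nat \<Rightarrow> bool) \<Rightarrow> fstate \<Rightarrow> fstate" where
  "fair_step N \<sigma> R Rap P Q tx s =
    (let hlp = helper N R Rap;
         S = {k. k < N \<and> tx k};
         d = (\<lambda>k. if to_helper hlp P s k then 1 / R k (the (hlp k))
                  else (1 + real (length (take Q (fq s k)))) / Rap k);
         busy = (if S = {} then 0 else Max (d ` S));
         s1 = s\<lparr>ftxt := (\<lambda>j. ftxt s j + (if j \<in> S then d j else 0)), fclk := fclk s + \<sigma> + busy\<rparr>
     in if card S = 1 then
          (let k = the_elem S in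
           if to_helper hlp P s k then
             (let h = the (hlp k) in
              s1\<lparr>fq := (fq s1)(h := fq s1 h @ [k]), pend := (pend s1)(k := pend s1 k + 1)\<rparr>)
           else
             (let fw = take Q (fq s k) in
              s1\<lparr>fdlv := (\<lambda>j. fdlv s1 j + count_list fw j + (if j = k then 1 else 0)),
                 pend := (\<lambda>j. pend s1 j - count_list fw j),
                 fq := (fq s1)(k := drop Q (fq s k))\<rparr>))
        else s1)"

definition finit :: fstate where
  "finit = \<lparr>pend = (\<lambda>_. 0), fq = (\<lambda>_. []), fdlv = (\<lambda>_. 0), ftxt = (\<lambda>_. 0), fclk = 0\<rparr>"

primrec fair_run :: "nat \<Rightarrow> real \<Rightarrow> (nat \<Rightarrow> nat \<Rightarrow> real) \<Rightarrow> (nat \<Rightarrow> real) \<Rightarrow> nat \<Rightarrow> nat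
    \<Rightarrow> (nat \<times> nat \<Rightarrow> bool) \<Rightarrow> nat \<Rightarrow> fstate" where
  "fair_run N \<sigma> R Rap P Q \<omega> 0 = finit"
| "fair_run N \<sigma> R Rap P Q \<omega> (Suc n) =
     fair_step N \<sigma> R Rap P Q (\<lambda>k. \<omega> (n, k)) (fair_run N \<sigma> R Rap P Q \<omega> n)"

definition thr_direct where
  "thr_direct N \<sigma> Rap \<omega> k n = real (ddlv (direct_run N \<sigma> Rap \<omega> n) k) / dclk (direct_run N \<sigma> Rap \<omega> n)"

definition pow_direct where
  "pow_direct \<E> N \<sigma> Rap \<omega> k n = \<E> * dtxt (direct_run N \<sigma> Rap \<omega> n) k / dclk (direct_run N \<sigma> Rap \<omega> n)"

definition thr_fair where
  "thr_fair N \<sigma> R Rap P Q \<omega> k n =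
     real (fdlv (fair_run N \<sigma> R Rap P Q \<omega> n) k) / fclk (fair_run N \<sigma> R Rap P Q \<omega> n)"

definition pow_fair where
  "pow_fair \<E> N \<sigma> R Rap P Q \<omega> k n =
     \<E> * ftxt (fair_run N \<sigma> R Rap P Q \<omega> n) k / fclk (fair_run N \<sigma> R Rap P Q \<omega> n)"

definition coins :: "real \<Rightarrow> (nat \<times> nat \<Rightarrow> bool) measure" where
  "coins \<tau> = Pi\<^sub>M UNIV (\<lambda>_. measure_pmf (bernoulli_pmf \<tau>))"

end

theory Submission
  imports Defs "HOL-Analysis.Analysis"
begin


lemma coins_prob: "prob_space (coins \<tau>)"
  unfolding coins_def by (intro prob_space_PiM measure_pmf.prob_space_axioms)

lemma indep_coord:
  "prob_space.indep_vars (coins \<tau>) (\<lambda>_. measure_pmf (bernoulli_pmf \<tau>)) (\<lambda>i \<omega>. \<omega> i) UNIV"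
proof -
  interpret product_prob_space "\<lambda>_::nat\<times>nat. measure_pmf (bernoulli_pmf \<tau>)" UNIV by unfold_locales
  show ?thesis unfolding coins_def
    apply (subst prob_space.indep_vars_iff_distr_eq_PiM[OF P.prob_space_axioms])
      apply simp
     apply simp
    apply (subst PiM_component)
     apply simp
    apply (simp add: restrict_UNIV)
    done
qed

lemma space_coins: "space (coins \<tau>) = UNIV"
  unfolding coins_def by (simp add: space_PiM)

lemma prob_row:
  assumes "k < N"
  shows "measure (coins \<tau>) {\<omega>\<in>space (coins \<tau>). \<forall>j<N. \<omega> (n,j) = (j = k)}
     = (\<Prod>j<N. measure (measure_pmf (bernoulli_pmf \<tau>)) {j = k})"
proof -
  interpret product_prob_space "\<lambda>_::nat\<times>nat. measure_pmf (bernoulli_pmf \<tau>)" UNIV by unfold_locales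
  have "{\<omega>\<in>space (coins \<tau>). \<forall>j<N. \<omega> (n,j) = (j = k)} =
        {x\<in>space (Pi\<^sub>M UNIV (\<lambda>_. measure_pmf (bernoulli_pmf \<tau>))). \<forall>i\<in>{n}\<times>{..<N}. x i \<in> {snd i = k}}"
    by (auto simp: coins_def)
  also have "emeasure (Pi\<^sub>M UNIV (\<lambda>_. measure_pmf (bernoulli_pmf \<tau>))) \<dots>
     = (\<Prod>i\<in>{n}\<times>{..<N}. emeasure (measure_pmf (bernoulli_pmf \<tau>)) {snd i = k})"
    by (rule emeasure_PiM_Collect) auto
  finally have e: "emeasure (coins \<tau>) {\<omega>\<in>space (coins \<tau>). \<forall>j<N. \<omega> (n,j) = (j = k)}
     = (\<Prod>i\<in>{n}\<times>{..<N}. emeasure (measure_pmf (bernoulli_pmf \<tau>)) {snd i = k})"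
    by (simp add: coins_def)
  have r: "(\<Prod>i\<in>{n}\<times>{..<N}. emeasure (measure_pmf (bernoulli_pmf \<tau>)) {snd i = k})
      = (\<Prod>j<N. emeasure (measure_pmf (bernoulli_pmf \<tau>)) {j = k})"
  proof -
    have "{n}\<times>{..<N} = Pair n ` {..<N}" by auto
    then show ?thesis by (simp add: prod.reindex inj_on_def)
  qed
  have "emeasure (coins \<tau>) {\<omega>\<in>space (coins \<tau>). \<forall>j<N. \<omega> (n,j) = (j = k)}
     = ennreal (\<Prod>j<N. measure (measure_pmf (bernoulli_pmf \<tau>)) {j = k})"
    using e r by (simp add: measure_pmf.emeasure_eq_measure prod_ennreal)
  then show ?thesis
    by (simp add: measure_def prod_nonneg)
qed

lemma meas_row: "{\<omega>\<in>space (coins \<tau>). \<forall>j<N. \<omega> (n,j) = (j = k)} \<in> sets (coins \<tau>)"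
  unfolding coins_def by measurable

lemma meas_Z: "{\<omega>\<in>space (coins \<tau>). \<forall>n\<ge>m. \<not>(\<forall>j<N. \<omega> (n,j) = (j = k))} \<in> sets (coins \<tau>)"
  unfolding coins_def by measurable

lemma meas_C: fixes n N k :: nat shows "{x\<in>space (PiM ({n}\<times>UNIV) (\<lambda>_. measure_pmf (bernoulli_pmf \<tau>))). \<not>(\<forall>j<N. x (n,j) = (j = k))} \<in> sets (PiM ({n}\<times>UNIV) (\<lambda>_. measure_pmf (bernoulli_pmf \<tau>)))"
proof -
  have [measurable]: "(\<lambda>x. x (n,j)) \<in> measurable (PiM ({n}\<times>UNIV) (\<lambda>_. measure_pmf (bernoulli_pmf \<tau>))) (count_space UNIV)" for j
    using measurable_component_singleton[of "(n,j)" "{n}\<times>UNIV" "\<lambda>_. measure_pmf (bernoulli_pmf \<tau>)"] by simp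
  have "{x\<in>space (PiM ({n}\<times>UNIV) (\<lambda>_. measure_pmf (bernoulli_pmf \<tau>))). x (n,j) = (j = k)} \<in> sets (PiM ({n}\<times>UNIV) (\<lambda>_. measure_pmf (bernoulli_pmf \<tau>)))" for j
    by measurable
  then have "{x\<in>space (PiM ({n}\<times>UNIV) (\<lambda>_. measure_pmf (bernoulli_pmf \<tau>))). \<forall>j\<in>{..<N}. x (n,j) = (j = k)} \<in> sets (PiM ({n}\<times>UNIV) (\<lambda>_. measure_pmf (bernoulli_pmf \<tau>)))"
    by (intro sets.sets_Collect_finite_All) auto
  then have "{x\<in>space (PiM ({n}\<times>UNIV) (\<lambda>_. measure_pmf (bernoulli_pmf \<tau>))). \<not>(\<forall>j\<in>{..<N}. x (n,j) = (j = k))} \<in> sets (PiM ({n}\<times>UNIV) (\<lambda>_. measure_pmf (bernoulli_pmf \<tau>)))"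
    by (rule sets.sets_Collect_neg)
  then show ?thesis by simp
qed


lemma inf_often:
  fixes k N m :: nat
  assumes tau: "0 < \<tau>" "\<tau> < 1" and kN: "k < N"
  shows "AE \<omega> in coins \<tau>. \<exists>n\<ge>m. \<forall>j<N. \<omega> (n,j) = (j = k)"
proof -
  interpret ps: prob_space "coins \<tau>" by (rule coins_prob)
  define q where "q = (\<Prod>j<N. measure (measure_pmf (bernoulli_pmf \<tau>)) {j = k})"
  have q0: "0 < q" unfolding q_def
    apply (intro prod_pos)
    subgoal for a using tau by (cases "a = k") (simp_all add: measure_pmf_single)
    done
  have "q = ps.prob {\<omega>\<in>space (coins \<tau>). \<forall>j<N. \<omega> (0,j) = (j = k)}"
    using prob_row[OF kN, of \<tau> 0] by (simp add: q_def)
  then have q1: "q \<le> 1" using ps.prob_le_1 by simp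
  define K where "K = (\<lambda>n::nat. {n}\<times>(UNIV::nat set))"
  have ind: "ps.indep_vars (\<lambda>n. PiM (K n) (\<lambda>_. measure_pmf (bernoulli_pmf \<tau>))) (\<lambda>n \<omega>. restrict \<omega> (K n)) UNIV"
    by (rule ps.indep_vars_restrict[OF indep_coord]) (auto simp: K_def disjoint_family_on_def)
  define C where "C n = {x\<in>space (PiM (K n) (\<lambda>_. measure_pmf (bernoulli_pmf \<tau>))). \<not>(\<forall>j<N. x (n,j) = (j = k))}" for n
  have Cs: "C n \<in> sets (PiM (K n) (\<lambda>_. measure_pmf (bernoulli_pmf \<tau>)))" for n
    unfolding C_def K_def by (rule meas_C)
  have pre: "(\<lambda>\<omega>. restrict \<omega> (K n)) -` C n \<inter> space (coins \<tau>) = space (coins \<tau>) - {\<omega>\<in>space (coins \<tau>). \<forall>j<N. \<omega> (n,j) = (j = k)}" for n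
    proof -
    have sp: "restrict \<omega> (K n) \<in> space (PiM (K n) (\<lambda>_. measure_pmf (bernoulli_pmf \<tau>)))" for \<omega>
      by (simp add: space_PiM)
    show ?thesis
      by (rule set_eqI) (simp add: C_def sp[unfolded K_def] space_coins K_def)
  qed
  have pr: "ps.prob ((\<lambda>\<omega>. restrict \<omega> (K n)) -` C n \<inter> space (coins \<tau>)) = 1 - q" for n
    unfolding pre using ps.prob_compl[OF meas_row, of N n k] prob_row[OF kN, of \<tau> n] q_def by simp
  have ev: "(\<lambda>\<omega>. restrict \<omega> (K n)) -` C n \<inter> space (coins \<tau>) \<in> sets (coins \<tau>)" for n
    unfolding pre using meas_row by (rule sets.compl_sets)
  define Z where "Z = {\<omega>\<in>space (coins \<tau>). \<forall>n\<ge>m. \<not>(\<forall>j<N. \<omega> (n,j) = (j = k))}"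
  have Zs: "Z \<in> sets (coins \<tau>)" unfolding Z_def by (rule meas_Z)
  have bound: "ps.prob Z \<le> (1 - q) ^ L" for L
  proof (cases "L = 0")
    case True then show ?thesis by (simp add: ps.prob_le_1)
  next
    case False
    have sub0: "Z \<subseteq> (\<Inter>n\<in>{m..<m+L}. space (coins \<tau>) - {\<omega>\<in>space (coins \<tau>). \<forall>j<N. \<omega> (n,j) = (j = k)})"
      unfolding Z_def by (simp add: space_coins subset_iff)
    have sub: "Z \<subseteq> (\<Inter>n\<in>{m..<m+L}. (\<lambda>\<omega>. restrict \<omega> (K n)) -` C n \<inter> space (coins \<tau>))"
      using sub0 by (simp only: pre)
    have "ps.prob Z \<le> ps.prob (\<Inter>n\<in>{m..<m+L}. (\<lambda>\<omega>. restrict \<omega> (K n)) -` C n \<inter> space (coins \<tau>))"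
      apply (rule ps.finite_measure_mono[OF sub])
      apply (rule sets.finite_INT)
        apply simp
      using False apply simp
      using ev by simp
    also have "\<dots> = (\<Prod>n\<in>{m..<m+L}. ps.prob ((\<lambda>\<omega>. restrict \<omega> (K n)) -` C n \<inter> space (coins \<tau>)))"
      by (rule ps.indep_varsD[OF ind]) (use False Cs in auto)
    also have "\<dots> = (1 - q) ^ L" by (simp add: pr)
    finally show ?thesis .
  qed
  have "(\<lambda>L. (1 - q) ^ L) \<longlonglongrightarrow> 0"
    using q0 q1 by (intro LIMSEQ_power_zero) auto
  then have "ps.prob Z \<le> 0"
    using bound by (intro LIMSEQ_le_const) auto
  then have "ps.prob Z = 0" using measure_nonneg[of "coins \<tau>" Z] by linarith
  then have "Z \<in> null_sets (coins \<tau>)"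
    using Zs by (simp add: ps.emeasure_eq_measure null_sets_def)
  then show ?thesis
    by (rule AE_I') (auto simp: Z_def)
qed



lemma pend_mono_step:
  "pend s j \<le> pend (fair_step N \<sigma> R Rap P 0 tx s) j"
  unfolding fair_step_def Let_def by auto

lemma pend_mono_run:
  "n \<le> n' \<Longrightarrow> pend (fair_run N \<sigma> R Rap P 0 \<omega> n) j \<le> pend (fair_run N \<sigma> R Rap P 0 \<omega> n') j"
proof (induction n' rule: dec_induct)
  case (step m) then show ?case
    using pend_mono_step[of "fair_run N \<sigma> R Rap P 0 \<omega> m" j N \<sigma> R Rap P "\<lambda>k. \<omega> (m, k)"] by simp
qed simp

lemma pend_inc:
  assumes "k < N" "helper N R Rap k = Some h" "tx k" "\<forall>j<N. j \<noteq> k \<longrightarrow> \<not> tx j" "pend s k \<le> P"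
  shows "pend (fair_step N \<sigma> R Rap P 0 tx s) k = pend s k + 1"
proof -
  have S: "{j. j < N \<and> tx j} = {k}" using assms by auto
  show ?thesis using assms unfolding fair_step_def Let_def S by (simp add: to_helper_def)
qed

lemma step_no_helper:
  fixes tx :: "nat \<Rightarrow> bool" and N :: nat
  assumes nh: "\<forall>j<N. \<not> to_helper (helper N R Rap) P s j"
  defines "S \<equiv> {j. j < N \<and> tx j}"
  shows "fdlv (fair_step N \<sigma> R Rap P 0 tx s) = (\<lambda>j. fdlv s j + (if card S = 1 \<and> j = the_elem S then 1 else 0))"
    and "ftxt (fair_step N \<sigma> R Rap P 0 tx s) = (\<lambda>j. ftxt s j + (if j \<in> S then 1 / Rap j else 0))"
    and "fclk (fair_step N \<sigma> R Rap P 0 tx s) = fclk s + \<sigma> + (if S = {} then 0 else Max ((\<lambda>k. 1 / Rap k) ` S))"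
proof -
  have d: "(\<lambda>k. if to_helper (helper N R Rap) P s k then 1 / R k (the (helper N R Rap k))
                  else (1 + real (length (take 0 (fq s k)))) / Rap k) ` S = (\<lambda>k. 1 / Rap k) ` S"
    using nh by (intro image_cong) (auto simp: S_def)
  have d2: "j \<in> S \<Longrightarrow> (if to_helper (helper N R Rap) P s j then 1 / R j (the (helper N R Rap j))
                  else (1 + real (length (take 0 (fq s j)))) / Rap j) = 1 / Rap j" for j
    using nh by (auto simp: S_def)
  have te: "card S = 1 \<Longrightarrow> \<not> to_helper (helper N R Rap) P s (the_elem S)"
    using nh by (metis (no_types, lifting) S_def card_1_singletonE mem_Collect_eq singletonI the_elem_eq)
  show "fdlv (fair_step N \<sigma> R Rap P 0 tx s) = (\<lambda>j. fdlv s j + (if card S = 1 \<and> j = the_elem S then 1 else 0))"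
    using te unfolding fair_step_def Let_def S_def[symmetric] by (auto simp: fun_eq_iff)
  show "ftxt (fair_step N \<sigma> R Rap P 0 tx s) = (\<lambda>j. ftxt s j + (if j \<in> S then 1 / Rap j else 0))"
    using te d2 unfolding fair_step_def Let_def S_def[symmetric] by (auto simp: fun_eq_iff)
  show "fclk (fair_step N \<sigma> R Rap P 0 tx s) = fclk s + \<sigma> + (if S = {} then 0 else Max ((\<lambda>k. 1 / Rap k) ` S))"
    using te d unfolding fair_step_def Let_def S_def[symmetric] by auto
qed

lemma dstep:
  fixes tx :: "nat \<Rightarrow> bool" and N :: nat
  defines "S \<equiv> {j. j < N \<and> tx j}"
  shows "ddlv (direct_step N \<sigma> Rap tx s) = (\<lambda>j. ddlv s j + (if card S = 1 \<and> j = the_elem S then 1 else 0))"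
    and "dtxt (direct_step N \<sigma> Rap tx s) = (\<lambda>j. dtxt s j + (if j \<in> S then 1 / Rap j else 0))"
    and "dclk (direct_step N \<sigma> Rap tx s) = dclk s + \<sigma> + (if S = {} then 0 else Max ((\<lambda>k. 1 / Rap k) ` S))"
  unfolding direct_step_def Let_def S_def[symmetric] by (auto simp: fun_eq_iff)


lemma one_node:
  assumes kN: "k < N" and H: "\<forall>m. \<exists>n\<ge>m. \<forall>j<N. \<omega> (n,j) = (j = k)"
  shows "\<exists>T. \<forall>n\<ge>T. \<not> to_helper (helper N R Rap) P (fair_run N \<sigma> R Rap P 0 \<omega> n) k"
proof (cases "helper N R Rap k")
  case None then show ?thesis by (auto simp: to_helper_def)
next
  case (Some h)
  let ?p = "\<lambda>n. pend (fair_run N \<sigma> R Rap P 0 \<omega> n) k"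
  have claim: "\<exists>T. i \<le> ?p T \<or> P < ?p T" for i
  proof (induction i)
    case 0 then show ?case by auto
  next
    case (Suc i)
    then obtain T where T: "i \<le> ?p T \<or> P < ?p T" by blast
    show ?case
    proof (cases "P < ?p T")
      case True then show ?thesis by blast
    next
      case False
      with T have iT: "i \<le> ?p T" by simp
      obtain n where n: "n \<ge> T" "\<forall>j<N. \<omega> (n,j) = (j = k)" using H by blast
      have "?p T \<le> ?p n" using pend_mono_run[OF n(1)] by blast
      show ?thesis
      proof (cases "P < ?p n")
        case True then show ?thesis by blast
      next
        case False
        have "?p (Suc n) = ?p n + 1"
          using pend_inc[of k N R Rap h "\<lambda>j. \<omega> (n, j)" "fair_run N \<sigma> R Rap P 0 \<omega> n" P \<sigma>] kN Some n(2) False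
          by simp
        then have "Suc i \<le> ?p (Suc n)" using iT \<open>?p T \<le> ?p n\<close> by simp
        then show ?thesis by blast
      qed
    qed
  qed
  obtain T where "Suc P \<le> ?p T \<or> P < ?p T" using claim by blast
  then have T: "P < ?p T" by (auto simp: Suc_le_eq)
  have "\<not> to_helper (helper N R Rap) P (fair_run N \<sigma> R Rap P 0 \<omega> n) k" if "n \<ge> T" for n
    using pend_mono_run[OF that, of N \<sigma> R Rap P \<omega> k] T by (simp add: to_helper_def Some)
  then show ?thesis by blast
qed

lemma all_nodes:
  assumes H: "\<forall>k<N. \<forall>m. \<exists>n\<ge>m. \<forall>j<N. \<omega> (n,j) = (j = k)"
  shows "\<exists>T. \<forall>n\<ge>T. \<forall>k<N. \<not> to_helper (helper N R Rap) P (fair_run N \<sigma> R Rap P 0 \<omega> n) k"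
proof -
  have "\<forall>k\<in>{..<N}. \<exists>T. \<forall>n\<ge>T. \<not> to_helper (helper N R Rap) P (fair_run N \<sigma> R Rap P 0 \<omega> n) k"
    using one_node H by blast
  then obtain f where f: "\<forall>k\<in>{..<N}. \<forall>n\<ge>f k. \<not> to_helper (helper N R Rap) P (fair_run N \<sigma> R Rap P 0 \<omega> n) k"
    by metis
  have "f k \<le> (\<Sum>k<N. f k)" if "k < N" for k
    using that by (intro member_le_sum) auto
  then show ?thesis using f by (metis le_trans lessThan_iff)
qed

lemma invariant:
  assumes T: "\<forall>n\<ge>T. \<forall>k<N. \<not> to_helper (helper N R Rap) P (fair_run N \<sigma> R Rap P 0 \<omega> n) k"
  shows "real (fdlv (fair_run N \<sigma> R Rap P 0 \<omega> (T+d)) j) - real (ddlv (direct_run N \<sigma> Rap \<omega> (T+d)) j)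
          = real (fdlv (fair_run N \<sigma> R Rap P 0 \<omega> T) j) - real (ddlv (direct_run N \<sigma> Rap \<omega> T) j)
       \<and> ftxt (fair_run N \<sigma> R Rap P 0 \<omega> (T+d)) j - dtxt (direct_run N \<sigma> Rap \<omega> (T+d)) j
          = ftxt (fair_run N \<sigma> R Rap P 0 \<omega> T) j - dtxt (direct_run N \<sigma> Rap \<omega> T) j
       \<and> fclk (fair_run N \<sigma> R Rap P 0 \<omega> (T+d)) - dclk (direct_run N \<sigma> Rap \<omega> (T+d))
          = fclk (fair_run N \<sigma> R Rap P 0 \<omega> T) - dclk (direct_run N \<sigma> Rap \<omega> T)"
proof (induction d)
  case 0 then show ?case by simp
next
  case (Suc d)
  have nh: "\<forall>k<N. \<not> to_helper (helper N R Rap) P (fair_run N \<sigma> R Rap P 0 \<omega> (T+d)) k"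
    using T by simp
  show ?case
    using Suc step_no_helper[OF nh, where tx="\<lambda>k. \<omega> (T+d, k)" and \<sigma>=\<sigma>] dstep[where N=N and tx="\<lambda>k. \<omega> (T+d, k)" and \<sigma>=\<sigma> and Rap=Rap and s="direct_run N \<sigma> Rap \<omega> (T+d)"]
    by (simp add: algebra_simps)
qed

lemma dbounds:
  assumes Rap: "\<And>k. k < N \<Longrightarrow> Rap k > 0" and sig: "\<sigma> > 0" and kN: "k < N"
  shows "dclk (direct_run N \<sigma> Rap \<omega> n) \<ge> \<sigma> * real n"
    and "real (ddlv (direct_run N \<sigma> Rap \<omega> n) k) \<le> real n"
    and "\<bar>dtxt (direct_run N \<sigma> Rap \<omega> n) k\<bar> \<le> (1 / Rap k) * real n"
proof -
  have busy: "0 \<le> (if S = {} then 0 else Max ((\<lambda>k. 1 / Rap k) ` S))" if "S \<subseteq> {..<N}" for S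
  proof (cases "S = {}")
    case False
    then obtain x where x: "x \<in> S" by blast
    have "finite S" using that finite_subset by blast
    then have "1 / Rap x \<le> Max ((\<lambda>k. 1 / Rap k) ` S)" using x by (intro Max_ge) auto
    moreover have "0 < 1 / Rap x" using Rap x that by auto
    ultimately have "0 \<le> Max ((\<lambda>k. 1 / Rap k) ` S)" by linarith
    then show ?thesis using False by simp
  qed simp
  show "dclk (direct_run N \<sigma> Rap \<omega> n) \<ge> \<sigma> * real n"
  proof (induction n)
    case (Suc n)
    have "0 \<le> (if {j. j < N \<and> \<omega> (n, j)} = {} then 0 else Max ((\<lambda>k. 1 / Rap k) ` {j. j < N \<and> \<omega> (n, j)}))"
      by (rule busy) auto
    then show ?case using Suc dstep(3)[where N=N and tx="\<lambda>k. \<omega> (n, k)" and \<sigma>=\<sigma> and Rap=Rap] by (simp add: algebra_simps)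
  qed (simp add: dinit_def)
  show "real (ddlv (direct_run N \<sigma> Rap \<omega> n) k) \<le> real n"
  proof (induction n)
    case (Suc n)
    have "ddlv (direct_run N \<sigma> Rap \<omega> (Suc n)) k \<le> ddlv (direct_run N \<sigma> Rap \<omega> n) k + 1"
      using dstep(1)[where N=N and tx="\<lambda>k. \<omega> (n, k)" and \<sigma>=\<sigma> and Rap=Rap and s="direct_run N \<sigma> Rap \<omega> n"]
      by (simp del: One_nat_def)
    then show ?case using Suc by simp
  qed (simp add: dinit_def)
  have rp: "0 < 1 / Rap k" using Rap kN by simp
  obtain c where c: "c = 1 / Rap k" by blast
  have cp: "0 < c" using rp c by simp
  have "0 \<le> dtxt (direct_run N \<sigma> Rap \<omega> n) k \<and> dtxt (direct_run N \<sigma> Rap \<omega> n) k \<le> c * real n"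
  proof (induction n)
    case (Suc n)
    have e: "dtxt (direct_run N \<sigma> Rap \<omega> (Suc n)) k = dtxt (direct_run N \<sigma> Rap \<omega> n) k + (if \<omega> (n,k) then c else 0)"
      using dstep(2)[where N=N and tx="\<lambda>k. \<omega> (n, k)" and \<sigma>=\<sigma> and Rap=Rap and s="direct_run N \<sigma> Rap \<omega> n"] kN c
      by simp
    show ?case unfolding e using Suc cp by (auto simp: algebra_simps)
  qed (simp add: dinit_def)
  then have "0 \<le> dtxt (direct_run N \<sigma> Rap \<omega> n) k \<and> dtxt (direct_run N \<sigma> Rap \<omega> n) k \<le> (1 / Rap k) * real n"
    using c by simp
  then show "\<bar>dtxt (direct_run N \<sigma> Rap \<omega> n) k\<bar> \<le> (1 / Rap k) * real n" by simp
qed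



lemma ratio_diff:
  fixes a a' b b' :: "nat \<Rightarrow> real"
  assumes ev: "\<forall>n\<ge>T. a n = a' n + c \<and> b n = b' n + C"
    and bb: "\<forall>n. b' n \<ge> s * real n" and s: "s > 0" and aa: "\<forall>n. \<bar>a' n\<bar> \<le> K * real n"
  shows "(\<lambda>n. a n / b n - a' n / b' n) \<longlonglongrightarrow> 0"
proof (rule Lim_null_comparison)
  define M where "M = (2*\<bar>c\<bar> + 2*\<bar>K\<bar>*\<bar>C\<bar>/s)/s"
  show "(\<lambda>n. M / real n) \<longlonglongrightarrow> 0" by (rule lim_const_over_n)
  obtain T2 :: nat where T2: "real T2 \<ge> 2*\<bar>C\<bar>/s" using real_arch_simple by blast
  have "norm (a n / b n - a' n / b' n) \<le> M / real n" if n: "n \<ge> max T (max T2 1)" for n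
  proof -
    define x where "x = a' n"
    define B' where "B' = b' n"
    define t where "t = s * real n"
    have n1: "real n \<ge> 1" using n by simp
    have tpos: "t > 0" using s n1 by (simp add: t_def)
    have tC: "t \<ge> 2*\<bar>C\<bar>"
    proof -
      have "real n \<ge> real T2" using n by simp
      then have "s * real n \<ge> s * (2*\<bar>C\<bar>/s)" using T2 s by (intro mult_left_mono) auto
      then show ?thesis using s by (simp add: t_def)
    qed
    have B't: "B' \<ge> t" using bb by (simp add: B'_def t_def)
    have B'pos: "B' > 0" using B't tpos by linarith
    have Bt: "B' + C \<ge> t/2" using B't tC by linarith
    have Bpos: "B' + C > 0" using Bt tpos by linarith
    have xb: "\<bar>x\<bar> \<le> \<bar>K\<bar> * real n" 
    proof -
      have "K * real n \<le> \<bar>K\<bar> * real n" by (intro mult_right_mono) auto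
      then show ?thesis using aa by (simp add: x_def) (meson order_trans)
    qed
    have eq: "a n / b n - a' n / b' n = c / (B' + C) - x * C / ((B' + C) * B')"
    proof -
      have an: "a n = x + c" "b n = B' + C" using ev n by (auto simp: x_def B'_def)
      have "(x + c) / (B' + C) - x / B' = c / (B' + C) - x * C / ((B' + C) * B')"
        using B'pos Bpos by (simp add: divide_simps) (simp add: algebra_simps)
      then show ?thesis using an by (simp add: x_def B'_def)
    qed
    have t1: "\<bar>c / (B' + C)\<bar> \<le> 2*\<bar>c\<bar> / t"
    proof -
      have t1a: "\<bar>c / (B' + C)\<bar> = \<bar>c\<bar> / (B' + C)" using Bpos by (simp add: abs_divide)
      have t1b: "\<bar>c\<bar> / (B' + C) \<le> \<bar>c\<bar> / (t/2)"
      proof (rule divide_left_mono)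
        show "t/2 \<le> B' + C" by (rule Bt)
        show "0 \<le> \<bar>c\<bar>" by simp
        show "0 < (B' + C) * (t/2)" using Bpos tpos by simp
      qed
      have t1c: "\<bar>c\<bar> / (t/2) = 2*\<bar>c\<bar> / t" by simp
      show ?thesis unfolding t1a using t1b unfolding t1c .
    qed
    have t2: "\<bar>x * C / ((B' + C) * B')\<bar> \<le> (\<bar>K\<bar> * real n * \<bar>C\<bar>) / ((t/2) * t)"
    proof -
      have "\<bar>x * C / ((B' + C) * B')\<bar> = \<bar>x\<bar> * \<bar>C\<bar> / ((B' + C) * B')"
        using Bpos B'pos by (simp add: abs_mult)
      also have "\<dots> \<le> (\<bar>K\<bar> * real n * \<bar>C\<bar>) / ((B' + C) * B')"
      proof (rule divide_right_mono)
        show "\<bar>x\<bar> * \<bar>C\<bar> \<le> \<bar>K\<bar> * real n * \<bar>C\<bar>" using xb by (rule mult_right_mono) simp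
        show "0 \<le> (B' + C) * B'" using Bpos B'pos by simp
      qed
      also have "\<dots> \<le> (\<bar>K\<bar> * real n * \<bar>C\<bar>) / ((t/2) * t)"
      proof (rule divide_left_mono)
        show "(t/2) * t \<le> (B' + C) * B'" using Bt B't tpos by (intro mult_mono) auto
        show "0 \<le> \<bar>K\<bar> * real n * \<bar>C\<bar>" by simp
        show "0 < (B' + C) * B' * (t / 2 * t)" using Bpos B'pos tpos by simp
      qed
      finally show ?thesis .
    qed
    have "(\<bar>K\<bar> * real n * \<bar>C\<bar>) / ((t/2) * t) = 2*\<bar>K\<bar>*\<bar>C\<bar>/s / t"
      using s n1 by (simp add: t_def field_simps)
    moreover have "2*\<bar>c\<bar> / t + 2*\<bar>K\<bar>*\<bar>C\<bar>/s / t = M / real n"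
      using s n1 by (simp add: t_def M_def field_simps)
    ultimately have "\<bar>c / (B' + C)\<bar> + \<bar>x * C / ((B' + C) * B')\<bar> \<le> M / real n"
      using t1 t2 by linarith
    then show ?thesis unfolding eq real_norm_def by linarith
  qed
  note * = this
  show "\<forall>\<^sub>F n in sequentially. norm (a n / b n - a' n / b' n) \<le> M / real n"
    using eventually_ge_at_top[of "max T (max T2 1)"] by eventually_elim (rule *)
qed


lemma lim_iff_diff:
  fixes f g :: "nat \<Rightarrow> real"
  assumes "(\<lambda>n. f n - g n) \<longlonglongrightarrow> 0"
  shows "(f \<longlonglongrightarrow> L) \<longleftrightarrow> (g \<longlonglongrightarrow> L)"
proof
  assume "f \<longlonglongrightarrow> L"
  from tendsto_diff[OF this assms] show "g \<longlonglongrightarrow> L" by simp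
next
  assume "g \<longlonglongrightarrow> L"
  from tendsto_add[OF this assms] show "f \<longlonglongrightarrow> L" by simp
qed

lemma det_main:
  assumes Rap: "\<And>k. k < N \<Longrightarrow> Rap k > 0" and sig: "\<sigma> > 0"
    and H: "\<forall>k<N. \<forall>m. \<exists>n\<ge>m. \<forall>j<N. \<omega> (n,j) = (j = k)" and kN: "k < N"
  shows "(\<lambda>n. thr_fair N \<sigma> R Rap P 0 \<omega> k n - thr_direct N \<sigma> Rap \<omega> k n) \<longlonglongrightarrow> 0"
    and "(\<lambda>n. pow_fair \<E> N \<sigma> R Rap P 0 \<omega> k n - pow_direct \<E> N \<sigma> Rap \<omega> k n) \<longlonglongrightarrow> 0"
proof -
  obtain T where T: "\<forall>n\<ge>T. \<forall>k<N. \<not> to_helper (helper N R Rap) P (fair_run N \<sigma> R Rap P 0 \<omega> n) k"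
    using all_nodes[OF H] by blast
  let ?F = "fair_run N \<sigma> R Rap P 0 \<omega>" and ?D = "direct_run N \<sigma> Rap \<omega>"
  define c1 where "c1 = real (fdlv (?F T) k) - real (ddlv (?D T) k)"
  define c2 where "c2 = ftxt (?F T) k - dtxt (?D T) k"
  define c3 where "c3 = fclk (?F T) - dclk (?D T)"
  have inv: "real (fdlv (?F n) k) = real (ddlv (?D n) k) + c1 \<and> ftxt (?F n) k = dtxt (?D n) k + c2
      \<and> fclk (?F n) = dclk (?D n) + c3" if "n \<ge> T" for n
  proof -
    have "n = T + (n - T)" using that by simp
    then show ?thesis using invariant[OF T, of "n - T" k] unfolding c1_def c2_def c3_def by (metis diff_add_cancel add.commute)
  qed
  show "(\<lambda>n. thr_fair N \<sigma> R Rap P 0 \<omega> k n - thr_direct N \<sigma> Rap \<omega> k n) \<longlonglongrightarrow> 0"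
    unfolding thr_fair_def thr_direct_def
  proof (rule ratio_diff[where T=T and c=c1 and C=c3 and s=\<sigma> and K=1])
    show "\<forall>n\<ge>T. real (fdlv (?F n) k) = real (ddlv (?D n) k) + c1 \<and> fclk (?F n) = dclk (?D n) + c3"
      using inv by blast
    show "\<forall>n. dclk (?D n) \<ge> \<sigma> * real n" using dbounds(1)[where N=N and Rap=Rap and \<sigma>=\<sigma> and k=k and \<omega>=\<omega>, OF Rap sig kN] by blast
    show "\<forall>n. \<bar>real (ddlv (?D n) k)\<bar> \<le> 1 * real n" using dbounds(2)[where N=N and Rap=Rap and \<sigma>=\<sigma> and k=k and \<omega>=\<omega>, OF Rap sig kN] by simp
  qed (rule sig)
  show "(\<lambda>n. pow_fair \<E> N \<sigma> R Rap P 0 \<omega> k n - pow_direct \<E> N \<sigma> Rap \<omega> k n) \<longlonglongrightarrow> 0"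
    unfolding pow_fair_def pow_direct_def
  proof (rule ratio_diff[where T=T and c="\<E> * c2" and C=c3 and s=\<sigma> and K="\<bar>\<E>\<bar> * (1 / Rap k)"])
    show "\<forall>n\<ge>T. \<E> * ftxt (?F n) k = \<E> * dtxt (?D n) k + \<E> * c2 \<and> fclk (?F n) = dclk (?D n) + c3"
      using inv by (simp add: algebra_simps)
    show "\<forall>n. dclk (?D n) \<ge> \<sigma> * real n" using dbounds(1)[where N=N and Rap=Rap and \<sigma>=\<sigma> and k=k and \<omega>=\<omega>, OF Rap sig kN] by blast
    show "\<forall>n. \<bar>\<E> * dtxt (?D n) k\<bar> \<le> \<bar>\<E>\<bar> * (1 / Rap k) * real n"
    proof
      fix n
      have "\<bar>\<E>\<bar> * \<bar>dtxt (?D n) k\<bar> \<le> \<bar>\<E>\<bar> * ((1 / Rap k) * real n)"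
        using dbounds(3)[where N=N and Rap=Rap and \<sigma>=\<sigma> and k=k and \<omega>=\<omega>, OF Rap sig kN] by (intro mult_left_mono) auto
      then show "\<bar>\<E> * dtxt (?D n) k\<bar> \<le> \<bar>\<E>\<bar> * (1 / Rap k) * real n" by (simp add: abs_mult mult.assoc)
    qed
  qed (rule sig)
qed

theorem proposition1:
  fixes N P :: nat and \<sigma> \<tau> \<E> :: real
    and R :: "nat \<Rightarrow> nat \<Rightarrow> real" and Rap :: "nat \<Rightarrow> real"
  assumes "\<And>k l. k < N \<Longrightarrow> l < N \<Longrightarrow> k \<noteq> l \<Longrightarrow> R k l > 0"
    and "\<And>k. k < N \<Longrightarrow> Rap k > 0"
    and "\<sigma> > 0" and "0 < \<tau>" and "\<tau> < 1" and "\<E> > 0"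
  shows "AE \<omega> in coins \<tau>. \<forall>k<N.
     (\<forall>S. (thr_fair N \<sigma> R Rap P 0 \<omega> k \<longlonglongrightarrow> S) \<longleftrightarrow> (thr_direct N \<sigma> Rap \<omega> k \<longlonglongrightarrow> S)) \<and>
     (\<forall>E. (pow_fair \<E> N \<sigma> R Rap P 0 \<omega> k \<longlonglongrightarrow> E) \<longleftrightarrow> (pow_direct \<E> N \<sigma> Rap \<omega> k \<longlonglongrightarrow> E)) \<and>
     (\<forall>S E S' E'. thr_fair N \<sigma> R Rap P 0 \<omega> k \<longlonglongrightarrow> S \<longrightarrow> pow_fair \<E> N \<sigma> R Rap P 0 \<omega> k \<longlonglongrightarrow> E \<longrightarrow>
        thr_direct N \<sigma> Rap \<omega> k \<longlonglongrightarrow> S' \<longrightarrow> pow_direct \<E> N \<sigma> Rap \<omega> k \<longlonglongrightarrow> E' \<longrightarrow>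
        E / S = E' / S')"
proof -
  have AEH: "AE \<omega> in coins \<tau>. \<forall>k\<in>{..<N}. \<forall>m. \<exists>n\<ge>m. \<forall>j<N. \<omega> (n,j) = (j = k)"
  proof (rule AE_finite_allI)
    fix k assume "k \<in> {..<N}"
    then have kN: "k < N" by simp
    show "AE \<omega> in coins \<tau>. \<forall>m. \<exists>n\<ge>m. \<forall>j<N. \<omega> (n,j) = (j = k)"
      unfolding AE_all_countable using inf_often[OF assms(4,5) kN] by blast
  qed simp
  show ?thesis
    using AEH
  proof eventually_elim
    case (elim \<omega>)
    then have H: "\<forall>k<N. \<forall>m. \<exists>n\<ge>m. \<forall>j<N. \<omega> (n,j) = (j = k)" by simp
    show ?case
    proof (rule allI, rule impI)
      fix k assume kN: "k < N"
      note d1 = det_main(1)[where N=N and Rap=Rap and \<sigma>=\<sigma> and \<omega>=\<omega> and k=k and R=R and P=P, OF assms(2) assms(3) H kN]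
      note d2 = det_main(2)[where N=N and Rap=Rap and \<sigma>=\<sigma> and \<omega>=\<omega> and k=k and R=R and P=P and \<E>=\<E>, OF assms(2) assms(3) H kN]
      have "\<forall>S. (thr_fair N \<sigma> R Rap P 0 \<omega> k \<longlonglongrightarrow> S) \<longleftrightarrow> (thr_direct N \<sigma> Rap \<omega> k \<longlonglongrightarrow> S)"
        using lim_iff_diff[OF d1] by blast
      moreover have "\<forall>E. (pow_fair \<E> N \<sigma> R Rap P 0 \<omega> k \<longlonglongrightarrow> E) \<longleftrightarrow> (pow_direct \<E> N \<sigma> Rap \<omega> k \<longlonglongrightarrow> E)"
        using lim_iff_diff[OF d2] by blast
      moreover have "\<forall>S E S' E'. thr_fair N \<sigma> R Rap P 0 \<omega> k \<longlonglongrightarrow> S \<longrightarrow> pow_fair \<E> N \<sigma> R Rap P 0 \<omega> k \<longlonglongrightarrow> E \<longrightarrow>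
        thr_direct N \<sigma> Rap \<omega> k \<longlonglongrightarrow> S' \<longrightarrow> pow_direct \<E> N \<sigma> Rap \<omega> k \<longlonglongrightarrow> E' \<longrightarrow>
        E / S = E' / S'"
      proof (intro allI impI)
        fix S E S' E'
        assume a: "thr_fair N \<sigma> R Rap P 0 \<omega> k \<longlonglongrightarrow> S" "pow_fair \<E> N \<sigma> R Rap P 0 \<omega> k \<longlonglongrightarrow> E"
          "thr_direct N \<sigma> Rap \<omega> k \<longlonglongrightarrow> S'" "pow_direct \<E> N \<sigma> Rap \<omega> k \<longlonglongrightarrow> E'"
        have "thr_direct N \<sigma> Rap \<omega> k \<longlonglongrightarrow> S" using a(1) lim_iff_diff[OF d1] by blast
        then have "S = S'" using a(3) LIMSEQ_unique by blast
        moreover have "pow_direct \<E> N \<sigma> Rap \<omega> k \<longlonglongrightarrow> E" using a(2) lim_iff_diff[OF d2] by blast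
        then have "E = E'" using a(4) LIMSEQ_unique by blast
        ultimately show "E / S = E' / S'" by simp
      qed
      ultimately show "(\<forall>S. (thr_fair N \<sigma> R Rap P 0 \<omega> k \<longlonglongrightarrow> S) \<longleftrightarrow> (thr_direct N \<sigma> Rap \<omega> k \<longlonglongrightarrow> S)) \<and>
     (\<forall>E. (pow_fair \<E> N \<sigma> R Rap P 0 \<omega> k \<longlonglongrightarrow> E) \<longleftrightarrow> (pow_direct \<E> N \<sigma> Rap \<omega> k \<longlonglongrightarrow> E)) \<and>
     (\<forall>S E S' E'. thr_fair N \<sigma> R Rap P 0 \<omega> k \<longlonglongrightarrow> S \<longrightarrow> pow_fair \<E> N \<sigma> R Rap P 0 \<omega> k \<longlonglongrightarrow> E \<longrightarrow>
        thr_direct N \<sigma> Rap \<omega> k \<longlonglongrightarrow> S' \<longrightarrow> pow_direct \<E> N \<sigma> Rap \<omega> k \<longlonglongrightarrow> E' \<longrightarrow>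
        E / S = E' / S')" by blast
    qed
  qed
qed

end
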